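(* Let $\mathcal{M}=[0,1]^2\subset\mathbb{R}^2$ with the Euclidean metric, let $k\ge 2$ be an integer, and let $P\subset\mathcal{M}$ be any set of $k$ points. Then $$GR_P\ \ge\ \frac{2}{\sqrt{3}}-\frac{C}{\sqrt{k}},\qquad\text{where } C=\frac{2^{3/2}}{3^{3/4}}.$$
   Context: For a metric space $(\mathcal{M},\delta)$ and a finite set $P\subset\mathcal{M}$ with $|P|\ge 2$, define $r_P=\min_{p,q\in P,\,p\neq q}\delta(p,q)/2$, $R_P=\sup_{x\in\mathcal{M}}\min_{p\in P}\delta(x,p)$, and the gap ratio $GR_P=R_P/r_P$. *)

theory Defs
  imports "HOL-Analysis.Analysis"
begin

definition packing_radius :: "'a::metric_space set \<Rightarrow> real" where
  "packing_radius P = (INF pq \<in> {(p, q). p \<in> P \<and> q \<in> P \<and> p \<noteq> q}. dist (fst pq) (snd pq)) / 2"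

definition covering_radius :: "'a::metric_space set \<Rightarrow> 'a set \<Rightarrow> real" where
  "covering_radius M P = (SUP x \<in> M. INF p \<in> P. dist x p)"

definition gap_ratio :: "'a::metric_space set \<Rightarrow> 'a set \<Rightarrow> real" where
  "gap_ratio M P = covering_radius M P / packing_radius P"

definition unit_square :: "(real \<times> real) set" where
  "unit_square = {0..1} \<times> {0..1}"

end

theory Submission imports Defs begin

lemma dist2: "(dist x y)^2 = (fst x - fst y)^2 + (snd x - snd y)^2" for x y :: "real \<times> real"
  by (cases x; cases y) (simp add: dist_Pair_Pair dist_real_def)

lemma dist_eq_sqrt: "dist x y = sqrt ((fst x - fst y)^2 + (snd x - snd y)^2)" for x y :: "real \<times> real"
  by (metis dist2 zero_le_dist real_sqrt_unique)

lemma dist_le_iff2: "dist x y \<le> dist u v \<longleftrightarrow> (dist x y)^2 \<le> (dist u v)^2" for x y u v :: "real \<times> real"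
  by (simp add: power_mono_iff)

lemma id3: "((a1-b1)^2+(a2-b2)^2) + ((a1-c1)^2+(a2-c2)^2) + ((b1-c1)^2+(b2-c2)^2) + ((a1+b1+c1-3*z1)^2 + (a2+b2+c2-3*z2)^2)
  = 3 * (((z1-a1)^2+(z2-a2)^2) + ((z1-b1)^2+(z2-b2)^2) + ((z1-c1)^2+(z2-c2)^2))" for a1 a2 b1 b2 c1 c2 z1 z2 :: real
  by algebra
lemma idm: "((p1+q1)/2 - s1)^2 + ((p2+q2)/2 - s2)^2 = (((s1-p1)^2+(s2-p2)^2) + ((s1-q1)^2+(s2-q2)^2))/2 - ((p1-q1)^2+(p2-q2)^2)/4" for p1 p2 q1 q2 s1 s2 :: real
  by (simp add: field_simps power2_eq_square)

lemma three_pts: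
  fixes z a b c :: "real \<times> real"
  assumes "dist z a = \<rho>" "dist z b = \<rho>" "dist z c = \<rho>"
    "d \<le> dist a b" "d \<le> dist a c" "d \<le> dist b c" "0 \<le> d"
  shows "d \<le> sqrt 3 * \<rho>"
proof -
  have r0: "\<rho> \<ge> 0" using assms(1) by auto
  have h1: "d^2 \<le> (dist a b)^2" "d^2 \<le> (dist a c)^2" "d^2 \<le> (dist b c)^2"
    using assms by (auto intro!: power_mono)
  have e: "(dist a b)^2 + (dist a c)^2 + (dist b c)^2 + ((fst a + fst b + fst c - 3 * fst z)^2 + (snd a + snd b + snd c - 3 * snd z)^2)
      = 3 * ((dist z a)^2 + (dist z b)^2 + (dist z c)^2)"
    unfolding dist2 by (rule id3)
  have "3 * d^2 \<le> 9 * \<rho>^2"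
    using e h1 assms(1-3) by (smt (verit) zero_le_power2)
  hence "d^2 \<le> (sqrt 3 * \<rho>)^2" by (simp add: power_mult_distrib)
  thus ?thesis using r0 power2_le_imp_le[of d "sqrt 3 * \<rho>"] by simp
qed

lemma midpoint_far:
  fixes p q s :: "real \<times> real"
  assumes "d \<le> dist s p \<or> s = p" "d \<le> dist s q \<or> s = q" "dist p q = d" "p \<noteq> q"
  shows "d / 2 \<le> dist ((fst p + fst q)/2, (snd p + snd q)/2) s"
proof -
  have d0: "d \<ge> 0" using assms(3) by auto
  have key: "d^2 \<le> (dist s p)^2 + (dist s q)^2"
  proof -
    have "d^2 \<le> (dist s p)^2 \<or> s = p" using assms(1) d0 by (auto intro: power_mono)
    moreover have "d^2 \<le> (dist s q)^2 \<or> s = q" using assms(2) d0 by (auto intro: power_mono)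
    moreover have "(dist q p)^2 = d^2" using assms(3) by (simp add: dist_commute)
    ultimately show ?thesis
    proof (elim disjE)
      assume "d^2 \<le> (dist s p)^2" "d^2 \<le> (dist s q)^2" thus ?thesis
        by (smt (verit) zero_le_power2)
    next
      assume "d^2 \<le> (dist s p)^2" "s = q" thus ?thesis by simp
    next
      assume "s = p" "d^2 \<le> (dist s q)^2" thus ?thesis by simp
    next
      assume "s = p" "s = q" thus ?thesis using assms(4) by simp
    qed
  qed
  have e: "(dist ((fst p + fst q)/2, (snd p + snd q)/2) s)^2 = ((dist s p)^2 + (dist s q)^2)/2 - (dist p q)^2/4"
    unfolding dist2 by (simp add: idm)
  have "(d/2)^2 \<le> (dist ((fst p + fst q)/2, (snd p + snd q)/2) s)^2"
    using e key assms(3) by (simp add: power2_eq_square field_simps)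
  thus ?thesis using d0 by (meson power2_le_imp_le zero_le_dist)
qed



lemma us_iff: "x \<in> unit_square \<longleftrightarrow> 0 \<le> fst x \<and> fst x \<le> 1 \<and> 0 \<le> snd x \<and> snd x \<le> 1"
  by (cases x) (auto simp: unit_square_def)

lemma sqid: "(z1 + s*t1 - q1)^2 + (z2 + s*t2 - q2)^2 = ((z1-q1)^2+(z2-q2)^2) + 2 * s * ((z1-q1)*t1 + (z2-q2)*t2) + s^2*(t1^2+t2^2)" for z1 z2 s t1 t2 q1 q2 :: real
  by algebra

lemma perturb:
  fixes z p0 :: "real \<times> real" and P :: "(real \<times> real) set"
  assumes fin: "finite P" and p0: "p0 \<in> P"
    and zi: "0 < fst z" "fst z < 1" "0 < snd z" "snd z < 1"
    and zK: "\<forall>q\<in>P. dist z p0 \<le> dist z q"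
    and one: "\<And>q1 q2. q1 \<in> P \<Longrightarrow> q1 \<noteq> p0 \<Longrightarrow> dist z q1 = dist z p0 \<Longrightarrow>
                q2 \<in> P \<Longrightarrow> q2 \<noteq> p0 \<Longrightarrow> dist z q2 = dist z p0 \<Longrightarrow> q1 = q2"
  shows "\<exists>z'. z' \<in> unit_square \<and> (\<forall>q\<in>P. dist z' p0 \<le> dist z' q) \<and> dist z p0 < dist z' p0"
proof -
  define act where "act q \<longleftrightarrow> q \<in> P \<and> q \<noteq> p0 \<and> dist z q = dist z p0" for q
  obtain t1 t2 :: real where tnz: "t1^2 + t2^2 > 0"
    and tperp: "\<And>q. act q \<Longrightarrow> t1 * (fst q - fst p0) + t2 * (snd q - snd p0) = 0"
  proof (cases "\<exists>q. act q")
    case True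
    then obtain q where q: "act q" by blast
    have "q \<noteq> p0" using q act_def by auto
    hence "(fst q - fst p0)^2 + (snd q - snd p0)^2 > 0"
    proof -
      have "dist q p0 > 0" using \<open>q \<noteq> p0\<close> by simp
      hence "(dist q p0)^2 > 0" by simp
      thus ?thesis unfolding dist2 .
    qed
    hence "(-(snd q - snd p0))^2 + (fst q - fst p0)^2 > 0" using power2_minus[of "snd q - snd p0"] by linarith
    moreover have "\<And>q'. act q' \<Longrightarrow> (-(snd q - snd p0)) * (fst q' - fst p0) + (fst q - fst p0) * (snd q' - snd p0) = 0"
    proof -
      fix q' assume "act q'"
      hence "q' = q" using one q unfolding act_def by blast
      thus "(-(snd q - snd p0)) * (fst q' - fst p0) + (fst q - fst p0) * (snd q' - snd p0) = 0"
        by (simp add: algebra_simps)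
    qed
    ultimately show ?thesis using that by blast
  next
    case False
    thus ?thesis using that[of 1 0] by auto
  qed
  define Q where "Q = {q \<in> P. dist z p0 < dist z q}"
  define g where "g = Min (insert 1 ((\<lambda>q. dist z q - dist z p0) ` Q))"
  have finQ: "finite Q" using fin Q_def by auto
  have g0: "g > 0" unfolding g_def using finQ by (auto simp: Q_def)
  have gle: "\<And>q. q \<in> Q \<Longrightarrow> g \<le> dist z q - dist z p0" unfolding g_def using finQ by auto
  define m where "m = min (min (fst z) (1 - fst z)) (min (snd z) (1 - snd z))"
  have m0: "m > 0" using zi m_def by auto
  define nt where "nt = sqrt (t1^2 + t2^2)"
  have nt0: "nt > 0" using tnz nt_def by auto
  have t1le: "\<bar>t1\<bar> \<le> nt" unfolding nt_def by (simp add: real_le_rsqrt)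
  have t2le: "\<bar>t2\<bar> \<le> nt" unfolding nt_def by (simp add: real_le_rsqrt)
  define e where "e = min g m / (2 * nt)"
  have e0: "e > 0" using g0 m0 nt0 e_def by auto
  have ent: "e * nt = min g m / 2" using nt0 e_def by auto
  define w where "w = (fst z - fst p0) * t1 + (snd z - snd p0) * t2"
  define s where "s = (if w \<ge> 0 then e else - e)"
  have sw: "s * w \<ge> 0" unfolding s_def using e0 by (auto simp: zero_le_mult_iff mult_le_0_iff)
  have sabs: "\<bar>s\<bar> = e" unfolding s_def using e0 by auto
  define z' where "z' = (fst z + s * t1, snd z + s * t2)"
  have move: "dist z z' = \<bar>s\<bar> * nt"
  proof -
    have "dist z z' = sqrt ((s*t1)^2 + (s*t2)^2)" unfolding dist_eq_sqrt z'_def by simp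
    also have "\<dots> = sqrt (s^2 * (t1^2+t2^2))" by (simp add: power_mult_distrib distrib_left)
    also have "\<dots> = \<bar>s\<bar> * nt" unfolding nt_def by (simp add: real_sqrt_mult)
    finally show ?thesis .
  qed
  have movele: "dist z z' \<le> min g m / 2" using move sabs ent by simp
  have sq: "\<And>q. (dist z' q)^2 = (dist z q)^2 + 2 * s * ((fst z - fst q) * t1 + (snd z - snd q) * t2) + s^2 * (t1^2+t2^2)"
    unfolding dist2 z'_def by (simp add: sqid)
  have inside: "z' \<in> unit_square"
  proof -
    have "\<bar>s * t1\<bar> \<le> e * nt" using sabs t1le e0 by (simp add: abs_mult mult_left_mono)
    moreover have "\<bar>s * t2\<bar> \<le> e * nt" using sabs t2le e0 by (simp add: abs_mult mult_left_mono)
    ultimately have "\<bar>s * t1\<bar> < m" "\<bar>s * t2\<bar> < m" using ent m0 g0 by auto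
    thus ?thesis unfolding us_iff z'_def m_def by auto
  qed
  have grow: "dist z p0 < dist z' p0"
  proof -
    have "s^2 * (t1^2+t2^2) > 0" using sabs e0 tnz by auto
    moreover have "2 * s * w \<ge> 0" using sw by simp
    ultimately have "(dist z p0)^2 < (dist z' p0)^2" using sq[of p0] unfolding w_def by linarith
    thus ?thesis by (simp add: power_less_imp_less_base)
  qed
  have cons: "\<forall>q\<in>P. dist z' p0 \<le> dist z' q"
  proof
    fix q assume qP: "q \<in> P"
    consider "q = p0" | "act q" | "q \<in> Q"
      using qP zK[rule_format, OF qP] unfolding act_def Q_def by fastforce
    thus "dist z' p0 \<le> dist z' q"
    proof cases
      case 1 thus ?thesis by simp
    next
      case 2
      hence eq: "dist z q = dist z p0" and pp: "t1 * (fst q - fst p0) + t2 * (snd q - snd p0) = 0"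
        using tperp act_def by auto
      have "(fst z - fst q) * t1 + (snd z - snd q) * t2 = (fst z - fst p0) * t1 + (snd z - snd p0) * t2"
        using pp by (simp add: algebra_simps)
      hence "(dist z' q)^2 = (dist z' p0)^2" using sq[of q] sq[of p0] eq by simp
      thus ?thesis by (simp add: dist_le_iff2)
    next
      case 3
      have "dist z' p0 \<le> dist z p0 + dist z z'" by (metis dist_commute dist_triangle)
      moreover have "dist z q \<le> dist z z' + dist z' q" by (rule dist_triangle)
      moreover have "g \<le> dist z q - dist z p0" using gle 3 by auto
      ultimately show ?thesis using movele by linarith
    qed
  qed
  show ?thesis using inside cons grow by blast
qed


lemma aux2: "(a::real) \<le> 4*x \<Longrightarrow> 4*x < a+1 \<Longrightarrow> a/4 \<le> x \<and> x \<le> (a+1)/4" by (simp add: field_simps)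
lemma aux: "(a::real)/4 \<le> x \<Longrightarrow> x \<le> (a+1)/4 \<Longrightarrow> a/4 \<le> y \<Longrightarrow> y \<le> (a+1)/4 \<Longrightarrow> \<bar>x-y\<bar> \<le> 1/4" 
  unfolding abs_le_iff by (simp add: field_simps)

lemma cell_bounds:
  fixes x :: real
  assumes "0 \<le> x" "x \<le> 1"
  shows "real (min 3 (nat \<lfloor>4*x\<rfloor>)) / 4 \<le> x \<and> x \<le> (real (min 3 (nat \<lfloor>4*x\<rfloor>)) + 1) / 4"
proof (cases "\<lfloor>4*x\<rfloor> \<le> 3")
  case True
  have f0: "\<lfloor>4*x\<rfloor> \<ge> 0" using assms by simp
  have "min 3 (nat \<lfloor>4*x\<rfloor>) = nat \<lfloor>4*x\<rfloor>" using True by linarith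
  moreover have "real (nat \<lfloor>4*x\<rfloor>) = of_int \<lfloor>4*x\<rfloor>" using f0 by simp
  ultimately have eq: "real (min 3 (nat \<lfloor>4*x\<rfloor>)) = of_int \<lfloor>4*x\<rfloor>" by simp
  have "of_int \<lfloor>4*x\<rfloor> \<le> 4*x" "4*x < of_int \<lfloor>4*x\<rfloor> + 1" by linarith+
  thus ?thesis unfolding eq by (rule aux2)
next
  case False
  hence "4 * x \<ge> 4" by linarith
  hence "x = 1" using assms by simp
  thus ?thesis by simp
qed

lemma cell_close:
  fixes x y :: real
  assumes "0 \<le> x" "x \<le> 1" "0 \<le> y" "y \<le> 1"
    "min 3 (nat \<lfloor>4*x\<rfloor>) = min 3 (nat \<lfloor>4*y\<rfloor>)"
  shows "\<bar>x - y\<bar> \<le> 1/4"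
proof -
  have e: "real (min 3 (nat \<lfloor>4*x\<rfloor>)) = real (min 3 (nat \<lfloor>4*y\<rfloor>))" using assms(5) by simp
  show ?thesis using cell_bounds[OF assms(1,2)] cell_bounds[OF assms(3,4)] unfolding e
    by (meson aux)
qed

lemma pigeon:
  fixes P :: "(real \<times> real) set"
  assumes "finite P" "P \<subseteq> unit_square" "card P \<ge> 17"
  shows "\<exists>p\<in>P. \<exists>q\<in>P. p \<noteq> q \<and> dist p q \<le> sqrt 2 / 4"
proof -
  define cl :: "real \<Rightarrow> nat" where "cl x = min 3 (nat \<lfloor>4*x\<rfloor>)" for x
  define g where "g p = (cl (fst p), cl (snd p))" for p :: "real \<times> real"
  have sub: "g ` P \<subseteq> {0..3} \<times> {0..3}" unfolding g_def cl_def by auto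
  have "\<not> inj_on g P"
  proof
    assume "inj_on g P"
    hence "card P \<le> card ({0..3::nat} \<times> {0..3::nat})" using card_inj_on_le[OF _ sub] by simp
    thus False using assms(3) by (simp add: card_cartesian_product)
  qed
  then obtain p q where pq: "p \<in> P" "q \<in> P" "p \<noteq> q" "g p = g q" unfolding inj_on_def by blast
  have pu: "p \<in> unit_square" "q \<in> unit_square" using pq assms(2) by auto
  have "\<bar>fst p - fst q\<bar> \<le> 1/4" "\<bar>snd p - snd q\<bar> \<le> 1/4"
    using cell_close[of "fst p" "fst q"] cell_close[of "snd p" "snd q"] pu pq(4)
    unfolding us_iff g_def cl_def by auto
  hence "(fst p - fst q)^2 \<le> (1/4)^2" "(snd p - snd q)^2 \<le> (1/4)^2"
    by (metis abs_ge_zero power2_abs power_mono)+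
  hence "(dist p q)^2 \<le> (sqrt 2 / 4)^2" unfolding dist2 by (simp add: power_divide)
  hence "dist p q \<le> sqrt 2 / 4" by (rule power2_le_imp_le) auto
  thus ?thesis using pq by blast
qed

definition nd :: "(real \<times> real) set \<Rightarrow> real \<times> real \<Rightarrow> real" where
  "nd P x = (INF p\<in>P. dist x p)"

lemma nd_le: "finite P \<Longrightarrow> p \<in> P \<Longrightarrow> nd P x \<le> dist x p"
  unfolding nd_def by (rule cINF_lower) (auto intro: bdd_below_finite)

lemma nd_ge: "P \<noteq> {} \<Longrightarrow> (\<And>p. p \<in> P \<Longrightarrow> a \<le> dist x p) \<Longrightarrow> a \<le> nd P x"
  unfolding nd_def by (rule cINF_greatest)

lemma nd_attain: "finite P \<Longrightarrow> P \<noteq> {} \<Longrightarrow> \<exists>p\<in>P. nd P x = dist x p"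
proof -
  assume a: "finite P" "P \<noteq> {}"
  have "Min ((\<lambda>p. dist x p) ` P) \<in> (\<lambda>p. dist x p) ` P" using a by (intro Min_in) auto
  moreover have "nd P x = Min ((\<lambda>p. dist x p) ` P)" unfolding nd_def using a by (intro cInf_eq_Min) auto
  ultimately show ?thesis by auto
qed

lemma sq_dist_le2: "x \<in> unit_square \<Longrightarrow> y \<in> unit_square \<Longrightarrow> dist x y \<le> 2"
proof -
  assume a: "x \<in> unit_square" "y \<in> unit_square"
  have "\<bar>fst x - fst y\<bar> \<le> 1" "\<bar>snd x - snd y\<bar> \<le> 1" using a unfolding us_iff by auto
  hence "(fst x - fst y)^2 \<le> 1" "(snd x - snd y)^2 \<le> 1" by (simp_all add: abs_square_le_1)
  hence "(dist x y)^2 \<le> 2^2" unfolding dist2 by simp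
  thus ?thesis by (rule power2_le_imp_le) auto
qed

lemma cov_ge:
  assumes "finite P" "P \<noteq> {}" "P \<subseteq> unit_square" "x \<in> unit_square"
  shows "nd P x \<le> covering_radius unit_square P"
proof -
  obtain p0 where p0: "p0 \<in> P" using assms(2) by blast
  have "bdd_above (nd P ` unit_square)"
  proof (rule bdd_aboveI2)
    fix y assume "y \<in> unit_square"
    thus "nd P y \<le> 2" using nd_le[OF assms(1) p0, of y] sq_dist_le2[of y p0] p0 assms(3) by auto
  qed
  hence "nd P x \<le> (SUP y\<in>unit_square. nd P y)" using assms(4) by (rule cSUP_upper2) simp
  thus ?thesis unfolding covering_radius_def nd_def .
qed

lemma geo:
  fixes P :: "(real \<times> real) set"
  assumes fin: "finite P" and sub: "P \<subseteq> unit_square" and ne: "P \<noteq> {}"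
    and dle: "\<forall>p\<in>P. \<forall>q\<in>P. p \<noteq> q \<longrightarrow> d \<le> dist p q" and d0: "0 \<le> d"
  shows "\<exists>w\<in>unit_square. d \<le> sqrt 3 * nd P w \<or> 1/4 \<le> nd P w"
proof -
  define c :: "real \<times> real" where "c = (1/2, 1/2)"
  have cu: "c \<in> unit_square" unfolding c_def us_iff by simp
  obtain p0 where p0: "p0 \<in> P" "nd P c = dist c p0" using nd_attain[OF fin ne] by blast
  define K where "K = {y \<in> unit_square. \<forall>q\<in>P. dist y p0 \<le> dist y q}"
  have "K = unit_square \<inter> (\<Inter>q\<in>P. {y. dist y p0 \<le> dist y q})" unfolding K_def by blast
  moreover have "compact unit_square" unfolding unit_square_def by (intro compact_Times compact_Icc)
  moreover have "closed (\<Inter>q\<in>P. {y. dist y p0 \<le> dist y q})"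
    by (intro closed_INT ballI closed_Collect_le continuous_on_dist continuous_on_id continuous_on_const)
  ultimately have cK: "compact K" by (simp add: compact_Int_closed)
  have "\<forall>q\<in>P. dist c p0 \<le> dist c q"
  proof
    fix q assume "q \<in> P"
    thus "dist c p0 \<le> dist c q" using nd_le[OF fin, of q c] p0(2) by simp
  qed
  hence cK': "c \<in> K" unfolding K_def using cu by blast
  obtain z where zK: "z \<in> K" and zmax: "\<forall>y\<in>K. dist y p0 \<le> dist z p0"
  proof -
    have "continuous_on K (\<lambda>y. dist y p0)" by (intro continuous_on_dist continuous_on_id continuous_on_const)
    moreover have "K \<noteq> {}" using cK' by blast
    ultimately show ?thesis using continuous_attains_sup[OF cK, of "\<lambda>y. dist y p0"] that by blast
  qed
  have zu: "z \<in> unit_square" and zc: "\<forall>q\<in>P. dist z p0 \<le> dist z q" using zK K_def by auto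
  have ndz: "nd P z = dist z p0"
  proof (rule antisym)
    show "nd P z \<le> dist z p0" by (rule nd_le[OF fin p0(1)])
    show "dist z p0 \<le> nd P z" by (rule nd_ge[OF ne]) (use zc in blast)
  qed
  show ?thesis
  proof (cases "0 < fst z \<and> fst z < 1 \<and> 0 < snd z \<and> snd z < 1")
    case False
    hence "fst z = 0 \<or> fst z = 1 \<or> snd z = 0 \<or> snd z = 1" using zu unfolding us_iff by auto
    hence "(1/2)^2 \<le> (dist z c)^2" unfolding dist2 c_def by (elim disjE) simp_all
    hence "1/2 \<le> dist z c" by (rule power2_le_imp_le) auto
    moreover have "dist z c \<le> dist z p0 + dist c p0" by (rule dist_triangle2)
    ultimately have "1/4 \<le> nd P z \<or> 1/4 \<le> nd P c" using ndz p0(2) by linarith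
    thus ?thesis using zu cu by blast
  next
    case True
    show ?thesis
    proof (cases "\<exists>q1 q2. q1 \<in> P \<and> q1 \<noteq> p0 \<and> dist z q1 = dist z p0 \<and>
                q2 \<in> P \<and> q2 \<noteq> p0 \<and> dist z q2 = dist z p0 \<and> q1 \<noteq> q2")
      case True
      then obtain q1 q2 where q: "q1 \<in> P" "q1 \<noteq> p0" "dist z q1 = dist z p0"
        "q2 \<in> P" "q2 \<noteq> p0" "dist z q2 = dist z p0" "q1 \<noteq> q2" by blast
      have "d \<le> sqrt 3 * dist z p0"
      proof (rule three_pts[of z p0 _ q1 q2])
        show "d \<le> dist p0 q1" using dle[rule_format, of p0 q1] p0(1) q(1,2) by auto
        show "d \<le> dist p0 q2" using dle[rule_format, of p0 q2] p0(1) q(4,5) by auto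
        show "d \<le> dist q1 q2" using dle[rule_format, of q1 q2] q(1,4,7) by auto
      qed (use q d0 in simp_all)
      hence "d \<le> sqrt 3 * nd P z" using ndz by simp
      thus ?thesis using zu by blast
    next
      case False
      have "\<exists>z'. z' \<in> unit_square \<and> (\<forall>q\<in>P. dist z' p0 \<le> dist z' q) \<and> dist z p0 < dist z' p0"
      proof (rule perturb[OF fin p0(1)])
        show "0 < fst z" "fst z < 1" "0 < snd z" "snd z < 1" using True by auto
        show "\<forall>q\<in>P. dist z p0 \<le> dist z q" by (rule zc)
        fix q1 q2 assume "q1 \<in> P" "q1 \<noteq> p0" "dist z q1 = dist z p0"
          "q2 \<in> P" "q2 \<noteq> p0" "dist z q2 = dist z p0"
        thus "q1 = q2" using False by blast
      qed
      then obtain z' where z': "z' \<in> K" "dist z p0 < dist z' p0" unfolding K_def by auto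
      have "dist z' p0 \<le> dist z p0" using zmax z'(1) by blast
      hence False using z'(2) by linarith
      thus ?thesis ..
    qed
  qed
qed


lemma C_ge: "2/3 \<le> 2 powr (3/2) / 3 powr (3/4 :: real)"
proof -
  have a: "2 \<le> 2 powr (3/2 :: real)" using powr_mono[of 1 "3/2" "2::real"] by simp
  have b: "3 powr (3/4 :: real) \<le> 3" using powr_mono[of "3/4" 1 "3::real"] by simp
  have c: "0 < 3 powr (3/4 :: real)" by simp
  show ?thesis by (rule frac_le) (use a b c in auto)
qed

lemma sqrt3_ge: "12/7 \<le> sqrt (3::real)"
  by (rule real_le_rsqrt) (simp add: power_divide)

lemma lin1: "a \<le> 7/6 \<Longrightarrow> 1/6 \<le> b \<Longrightarrow> 1 \<le> g \<Longrightarrow> a - b \<le> (g::real)" by linarith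

theorem lemma2:
  fixes P :: "(real \<times> real) set" and k :: nat
  assumes "k \<ge> 2" and "finite P" and "card P = k" and "P \<subseteq> unit_square"
  shows "gap_ratio unit_square P \<ge> 2 / sqrt 3 - (2 powr (3/2) / 3 powr (3/4)) / sqrt (real k)"
proof -
  have fin: "finite P" and sub: "P \<subseteq> unit_square" using assms by auto
  have ne: "P \<noteq> {}" using assms by auto
  then obtain a where a: "a \<in> P" by blast
  have "P \<noteq> {a}" using assms by auto
  then obtain b where b: "b \<in> P" "b \<noteq> a" using a by blast
  define S where "S = {(p, q). p \<in> P \<and> q \<in> P \<and> p \<noteq> q}"
  define D where "D = (\<lambda>pq. dist (fst pq) (snd pq)) ` S"
  have "S \<subseteq> P \<times> P" unfolding S_def by auto
  hence finS: "finite S" using fin by (meson finite_SigmaI finite_subset)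
  have abS: "(a, b) \<in> S" unfolding S_def using a b by auto
  have finD: "finite D" and neD: "D \<noteq> {}" unfolding D_def using finS abS by auto
  define d where "d = Min D"
  have pr: "packing_radius P = d / 2"
  proof -
    have "packing_radius P = Inf D / 2" unfolding packing_radius_def D_def S_def by simp
    thus ?thesis unfolding d_def using cInf_eq_Min[OF finD neD] by simp
  qed
  have dle: "\<forall>p\<in>P. \<forall>q\<in>P. p \<noteq> q \<longrightarrow> d \<le> dist p q"
  proof (intro ballI impI)
    fix p q assume "p \<in> P" "q \<in> P" "p \<noteq> q"
    hence "dist p q \<in> D" unfolding D_def S_def by force
    thus "d \<le> dist p q" unfolding d_def using finD by simp
  qed
  have "d \<in> D" unfolding d_def using finD neD by simp
  then obtain pq0 where pq0: "pq0 \<in> S" "d = dist (fst pq0) (snd pq0)" unfolding D_def by blast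
  define p where "p = fst pq0"
  define q where "q = snd pq0"
  have pq: "p \<in> P" "q \<in> P" "p \<noteq> q" "dist p q = d"
    using pq0 unfolding p_def q_def S_def by (cases pq0; auto)+
  have d0: "d > 0" using pq by auto
  define R where "R = covering_radius unit_square P"
  have gr: "gap_ratio unit_square P = 2 * R / d" unfolding gap_ratio_def pr R_def by simp
  define m :: "real \<times> real" where "m = ((fst p + fst q)/2, (snd p + snd q)/2)"
  have "p \<in> unit_square" "q \<in> unit_square" using pq sub by auto
  hence mu: "m \<in> unit_square" unfolding m_def us_iff by auto
  have "d / 2 \<le> nd P m"
  proof (rule nd_ge[OF ne])
    fix s assume s: "s \<in> P"
    show "d / 2 \<le> dist m s" unfolding m_def
    proof (rule midpoint_far)
      show "d \<le> dist s p \<or> s = p" using dle s pq by (auto simp: dist_commute)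
      show "d \<le> dist s q \<or> s = q" using dle s pq by (auto simp: dist_commute)
    qed (use pq in auto)
  qed
  hence Rd: "d / 2 \<le> R" using cov_ge[OF fin ne sub mu] R_def by linarith
  hence R0: "R > 0" using d0 by linarith
  define C where "C = 2 powr (3/2) / 3 powr (3/4 :: real)"
  have C23: "2/3 \<le> C" unfolding C_def by (rule C_ge)
  have sk: "sqrt (real k) > 0" using assms(1) by simp
  have Tle: "2 / sqrt 3 - C / sqrt (real k) \<le> 2 / sqrt 3"
    using C23 sk by simp
  have s3: "0 < sqrt (3::real)" by simp
  have main: "2 / sqrt 3 - C / sqrt (real k) \<le> 2 * R / d"
  proof (cases "k \<le> 16")
    case True
    have "real k \<le> 16" using True by simp
    hence "sqrt (real k) \<le> sqrt 16" by (rule real_sqrt_le_mono)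
    moreover have "sqrt (16::real) = 4" by (rule real_sqrt_unique) auto
    ultimately have "sqrt (real k) \<le> 4" by simp
    hence "C / 4 \<le> C / sqrt (real k)" using sk C23 by (intro divide_left_mono) auto
    hence "1/6 \<le> C / sqrt (real k)" using C23 by linarith
    moreover have "2 / sqrt 3 \<le> 2 / (12/7)" using sqrt3_ge by (intro divide_left_mono) auto
    moreover have "1 \<le> 2 * R / d" using Rd d0 by (simp add: le_divide_eq)
    moreover have "2 / (12/7 :: real) = 7/6" by simp
    ultimately show ?thesis using lin1[of "2 / sqrt 3" "C / sqrt (real k)" "2 * R / d"] by simp
  next
    case False
    hence "card P \<ge> 17" using assms by auto
    then obtain p' q' where "p' \<in> P" "q' \<in> P" "p' \<noteq> q'" "dist p' q' \<le> sqrt 2 / 4"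
      using pigeon[OF fin sub] by blast
    hence dsm: "d \<le> sqrt 2 / 4" using dle by fastforce
    obtain w where wu: "w \<in> unit_square" and wc: "d \<le> sqrt 3 * nd P w \<or> 1/4 \<le> nd P w"
      using geo[OF fin sub ne dle] d0 by auto
    have ndR: "nd P w \<le> R" using cov_ge[OF fin ne sub wu] R_def by simp
    have "2 / sqrt 3 \<le> 2 * R / d"
    proof (cases "d \<le> sqrt 3 * nd P w")
      case True
      hence "d \<le> sqrt 3 * R" using ndR s3 by (smt (verit) mult_left_mono)
      hence "2 * R / (sqrt 3 * R) \<le> 2 * R / d" using d0 R0 by (intro divide_left_mono) auto
      moreover have "2 * R / (sqrt 3 * R) = 2 / sqrt 3" using R0 by simp
      ultimately show ?thesis by simp
    next
      case False
      hence "1/4 \<le> R" using wc ndR by linarith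
      hence "2 * (1/4) / d \<le> 2 * R / d" using d0 by (intro divide_right_mono) auto
      moreover have "2 * (1/4) / (sqrt 2 / 4) \<le> 2 * (1/4) / d" using d0 dsm by (intro divide_left_mono) auto
      moreover have "2 * (1/4) / (sqrt 2 / 4) = 2 / sqrt (2::real)" by simp
      moreover have "2 / sqrt 3 \<le> 2 / sqrt (2::real)" by (intro divide_left_mono) auto
      ultimately show ?thesis by (metis order_trans)
    qed
    thus ?thesis using Tle by linarith
  qed
  thus ?thesis using main unfolding C_def gr by simp
qed

end
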